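(* Let $q$ be a probability mass function on $\mathbb{Z}$ with $q(z)=q(-z)$ for all $z$, whose support is not contained in any coset $c+d\mathbb{Z}$ with $d\ge2$ (equivalently, its characteristic function $\psi(u)=\sum_z q(z)e^{iuz}$ satisfies $|\psi(u)|<1$ for $0<|u|\le\pi$). Let $P^t(z,w)$ be the $t$-step transition probabilities of the random walk with increment law $q$. Then for every $m\in\mathbb{N}$ there exists $r\in\mathbb{N}$ such that the $r\times(m+1)$ matrix $$\mathbf{M}=\big(P^{t}(0,j)\big)_{1\le t\le r,\ 0\le j\le m}$$ has rank $m+1$. *)

theory Defs
  imports "HOL-Probability.Probability_Mass_Function" "Jordan_Normal_Form.DL_Rank"
begin

primrec walk_dist :: "int pmf \<Rightarrow> nat \<Rightarrow> int pmf" where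
  "walk_dist q 0 = return_pmf 0"
| "walk_dist q (Suc t) = bind_pmf (walk_dist q t) (\<lambda>x. map_pmf (\<lambda>z. x + z) q)"

definition trans_prob :: "int pmf \<Rightarrow> nat \<Rightarrow> int \<Rightarrow> int \<Rightarrow> real" where
  "trans_prob q t z w = pmf (walk_dist q t) (w - z)"

end

theory Submission
  imports Defs "HOL-Analysis.Analysis" "HOL-Computational_Algebra.Polynomial"
begin


definition chi :: "int pmf \<Rightarrow> real \<Rightarrow> real" where
  "chi p u = measure_pmf.expectation p (\<lambda>z. cos (u * real_of_int z))"

lemma integrable_pmf_bounded:
  fixes f :: "int \<Rightarrow> real"
  assumes "\<And>x. \<bar>f x\<bar> \<le> B"
  shows "integrable (measure_pmf p) f"
  by (rule measure_pmf.integrable_const_bound[where B=B]) (auto simp: assms)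

lemma map_uminus_sym:
  assumes "\<forall>z. pmf p z = pmf p (- z)"
  shows "map_pmf uminus p = (p :: int pmf)"
proof (rule pmf_eqI)
  fix z :: int
  have "pmf (map_pmf uminus p) (uminus (-z)) = pmf p (-z)"
    by (rule pmf_map_inj') (auto intro: injI)
  then show "pmf (map_pmf uminus p) z = pmf p z" using assms by simp
qed

lemma sin_exp_zero:
  assumes "\<forall>z. pmf p z = pmf p (- z)"
  shows "measure_pmf.expectation p (\<lambda>z. sin (u * real_of_int z)) = 0"
proof -
  let ?E = "measure_pmf.expectation p (\<lambda>z. sin (u * real_of_int z))"
  have "?E = measure_pmf.expectation (map_pmf uminus p) (\<lambda>z. sin (u * real_of_int z))"
    using map_uminus_sym[OF assms] by simp
  also have "\<dots> = measure_pmf.expectation p (\<lambda>z. - sin (u * real_of_int z))"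
    by simp
  also have "\<dots> = - ?E" by simp
  finally show ?thesis by simp
qed

lemma expectation_bind_pmf:
  fixes f :: "int \<Rightarrow> real"
  assumes "\<And>x. \<bar>f x\<bar> \<le> B"
  shows "measure_pmf.expectation (bind_pmf w N) f =
     measure_pmf.expectation w (\<lambda>x. measure_pmf.expectation (N x) f)"
  unfolding measure_pmf_bind
  by (rule integral_bind[where K="count_space UNIV" and B=B and B'=1])
     (auto simp: assms measure_pmf.prob_space_axioms prob_space_imp_subprob_space 
        measure_pmf.emeasure_space_1 measure_pmf.finite_measure_axioms measure_pmf_in_subprob_algebra)

lemma chi_bind:
  assumes "\<forall>z. pmf q z = pmf q (- z)"
  shows "chi (bind_pmf w (\<lambda>x. map_pmf (\<lambda>z. x + z) q)) u = chi w u * chi q u"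
proof -
  have "chi (bind_pmf w (\<lambda>x. map_pmf (\<lambda>z. x + z) q)) u =
     measure_pmf.expectation w (\<lambda>x. measure_pmf.expectation q (\<lambda>z. cos (u * real_of_int (x + z))))"
    unfolding chi_def by (subst expectation_bind_pmf[where B=1]) auto
  also have "\<dots> = measure_pmf.expectation w (\<lambda>x. cos (u * x) * chi q u)"
  proof (rule Bochner_Integration.integral_cong[OF refl])
    fix x
    have "measure_pmf.expectation q (\<lambda>z. cos (u * real_of_int (x + z))) =
       measure_pmf.expectation q (\<lambda>z. cos (u * x) * cos (u * z) - sin (u * x) * sin (u * z))"
      by (simp add: distrib_left cos_add)
    also have "\<dots> = cos (u * x) * chi q u - sin (u * x) * measure_pmf.expectation q (\<lambda>z. sin (u * real_of_int z))"
      unfolding chi_def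
      by (subst Bochner_Integration.integral_diff)
         (auto intro!: integrable_pmf_bounded[where B=1] simp: abs_mult)
    finally show "measure_pmf.expectation q (\<lambda>z. cos (u * real_of_int (x + z))) = cos (u * x) * chi q u"
      using sin_exp_zero[OF assms] by simp
  qed
  also have "\<dots> = chi w u * chi q u" unfolding chi_def by simp
  finally show ?thesis .
qed

lemma chi_walk:
  assumes "\<forall>z. pmf q z = pmf q (- z)"
  shows "chi (walk_dist q t) u = chi q u ^ t"
  by (induction t) (simp_all add: chi_bind[OF assms] mult.commute, simp add: chi_def)

lemma walk_sym:
  assumes "\<forall>z. pmf q z = pmf q (- z)"
  shows "map_pmf uminus (walk_dist q t) = walk_dist q t"
proof (induction t)
  case 0 then show ?case by simp
next
  case (Suc t)
  have "map_pmf uminus (walk_dist q (Suc t)) =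
      bind_pmf (walk_dist q t) (\<lambda>x. map_pmf (\<lambda>z. - x + z) (map_pmf uminus q))"
    by (auto simp: map_bind_pmf pmf.map_comp o_def intro!: bind_pmf_cong map_pmf_cong)
  also have "\<dots> = bind_pmf (walk_dist q t) (\<lambda>x. map_pmf (\<lambda>z. - x + z) q)"
    by (simp only: map_uminus_sym[OF assms])
  also have "\<dots> = bind_pmf (map_pmf uminus (walk_dist q t)) (\<lambda>x. map_pmf (\<lambda>z. x + z) q)"
    by (auto simp: bind_map_pmf o_def intro!: bind_pmf_cong map_pmf_cong)
  also have "\<dots> = walk_dist q (Suc t)" using Suc by simp
  finally show ?case .
qed

lemma walk_sym_pmf:
  assumes "\<forall>z. pmf q z = pmf q (- z)"
  shows "pmf (walk_dist q t) (- z) = pmf (walk_dist q t) z"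
proof -
  have "pmf (map_pmf uminus (walk_dist q t)) (uminus z) = pmf (walk_dist q t) z"
    by (rule pmf_map_inj') (auto intro: injI)
  then show ?thesis using walk_sym[OF assms] by simp
qed



lemma isCont_chi: "isCont (chi p) u"
  unfolding continuous_at_sequentially
proof safe
  fix X assume X: "X \<longlonglongrightarrow> u"
  show "(chi p \<circ> X) \<longlonglongrightarrow> chi p u"
    unfolding comp_def chi_def
    by (rule integral_dominated_convergence[where w="\<lambda>_. 1"]) (auto intro!: tendsto_intros X)
qed

lemma continuous_on_chi: "continuous_on S (chi p)"
  by (intro continuous_at_imp_continuous_on ballI isCont_chi)

lemma abs_chi_le: "\<bar>chi p u\<bar> \<le> 1"
proof -
  have "\<bar>chi p u\<bar> \<le> measure_pmf.expectation p (\<lambda>z. \<bar>cos (u * real_of_int z)\<bar>)"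
    unfolding chi_def by (rule integral_abs_bound)
  also have "\<dots> \<le> measure_pmf.expectation p (\<lambda>z. 1)"
    by (intro integral_mono integrable_pmf_bounded[where B=1]) auto
  finally show ?thesis by simp
qed

lemma chi_0: "chi p 0 = 1"
  unfolding chi_def by simp

lemma has_integral_cos_int:
  "((\<lambda>x. cos(real_of_int n * x)) has_integral (if n = 0 then pi else 0)) {0..pi}"
proof (cases "n = 0")
  case True
  then show ?thesis
    using has_integral_const_real [of "1::real" "0" pi] by auto
next
  case False
  have "((\<lambda>x. cos (n * x)) has_integral (sin (real_of_int n * pi)/real_of_int n - sin (real_of_int n * 0)/real_of_int n)) {0..pi}"
  proof (rule fundamental_theorem_of_calculus)
    show "((\<lambda>x. sin (n * x) / n) has_vector_derivative cos (n * x)) (at x within {0..pi})"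
      if "x \<in> {0..pi}"
      for x :: real
      using that False
      unfolding has_vector_derivative_def
      by (intro derivative_eq_intros | force)+
  qed auto
  with False show ?thesis
    by (simp add: mult.commute)
qed

definition kap :: "int \<Rightarrow> int \<Rightarrow> real" where
  "kap a b = (if a = b \<and> a = - b then pi else if a = b \<or> a = - b then pi / 2 else 0)"

lemma has_integral_cos_cos:
  "((\<lambda>x. cos (real_of_int a * x) * cos (real_of_int b * x)) has_integral kap a b) {0..pi}"
proof -
  have "((\<lambda>x. (cos(real_of_int (a - b) * x) + cos(real_of_int (a + b) * x)) / 2) has_integral
      ((if a - b = 0 then pi else 0) + (if a + b = 0 then pi else 0)) / 2) {0..pi}"
    by (intro has_integral_divide has_integral_add has_integral_cos_int)
  moreover have "((if a - b = 0 then pi else 0) + (if a + b = 0 then pi else 0)) / 2 = kap a b"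
    unfolding kap_def by auto
  ultimately show ?thesis
    by (simp add: cos_times_cos algebra_simps)
qed

lemma integral_cos_cos:
  "integral {0..pi} (\<lambda>x. cos (real_of_int a * x) * cos (real_of_int b * x)) = kap a b"
  using has_integral_cos_cos integral_unique by blast

lemma inversion:
  "integral {0..pi} (\<lambda>u. chi p u * cos (real_of_int b * u)) =
    (\<Sum>a\<in>{b, -b}. kap a b * pmf p a)"
proof -
  let ?M1 = "measure_pmf p" and ?M2 = "lebesgue_on {0..pi::real}"
  let ?f = "\<lambda>(z::int) (u::real). cos (real_of_int z * u) * cos (real_of_int b * u)"
  let ?F = "case_prod ?f"
  have fin2: "finite_measure ?M2"
    by (rule finite_measure_lebesgue_on) auto
  interpret M2: finite_measure ?M2 by (rule fin2)
  interpret P: pair_sigma_finite ?M1 ?M2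
    by unfold_locales
  have cont: "continuous_on {0..pi} (\<lambda>u. cos (real_of_int z * u) * cos (real_of_int b * u))" for z
    by (intro continuous_intros)
  have meas: "?F \<in> borel_measurable (?M1 \<Otimes>\<^sub>M ?M2)"
    unfolding measurable_cong_sets[OF sets_pair_measure_cong[OF sets_measure_pmf_count_space refl] refl]
    by (rule measurable_pair_measure_countable1[where A=UNIV])
       (auto intro!: continuous_imp_measurable_on_sets_lebesgue cont)
  have fin12: "finite_measure (?M1 \<Otimes>\<^sub>M ?M2)"
    by (intro finite_measure_pair_measure fin2 measure_pmf.finite_measure_axioms)
  have intF: "integrable (?M1 \<Otimes>\<^sub>M ?M2) ?F"
    by (rule finite_measure.integrable_const_bound[OF fin12, where B=1])
       (auto simp: meas abs_mult split: prod.splits intro!: AE_I2 mult_le_one)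
  have "(\<integral>u. (\<integral>z. ?f z u \<partial>?M1) \<partial>?M2) = (\<integral>z. (\<integral>u. ?f z u \<partial>?M2) \<partial>?M1)"
    by (rule P.Fubini_integral[OF intF])
  also have "\<dots> = (\<integral>z. kap z b \<partial>?M1)"
  proof (rule Bochner_Integration.integral_cong[OF refl])
    fix z
    show "(\<integral>u. ?f z u \<partial>?M2) = kap z b"
      using lebesgue_integral_eq_integral[OF continuous_imp_integrable_real[OF cont]] 
        integral_cos_cos[of z b] by simp
  qed
  also have "\<dots> = (\<Sum>a\<in>{b, -b}. kap a b * pmf p a)"
    by (rule integral_measure_pmf_real) (auto simp: kap_def split: if_splits)
  finally have eq: "(\<integral>u. (\<integral>z. ?f z u \<partial>?M1) \<partial>?M2) = (\<Sum>a\<in>{b, -b}. kap a b * pmf p a)" .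
  have "(\<integral>u. (\<integral>z. ?f z u \<partial>?M1) \<partial>?M2) = (\<integral>u. chi p u * cos (real_of_int b * u) \<partial>?M2)"
    unfolding chi_def by (simp add: mult.commute)
  also have "\<dots> = integral {0..pi} (\<lambda>u. chi p u * cos (real_of_int b * u))"
    by (intro lebesgue_integral_eq_integral continuous_imp_integrable_real continuous_intros
         continuous_on_chi) auto
  finally show ?thesis using eq by simp
qed



lemma chi_eq_1_supp:
  assumes "chi p u = 1" "z \<in> set_pmf p"
  shows "cos (u * real_of_int z) = 1"
proof -
  have int: "integrable (measure_pmf p) (\<lambda>z. 1 - cos (u * real_of_int z))"
    by (rule integrable_pmf_bounded[where B=2]) (smt (verit) cos_le_one cos_ge_minus_one)
  have "measure_pmf.expectation p (\<lambda>z. 1 - cos (u * real_of_int z)) = 0"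
    using assms(1) unfolding chi_def
    by (subst Bochner_Integration.integral_diff) (auto intro!: integrable_pmf_bounded[where B=1])
  then have "AE z in measure_pmf p. 1 - cos (u * real_of_int z) = 0"
    using integral_nonneg_eq_0_iff_AE[OF int] AE_I2[of "measure_pmf p" "\<lambda>z. 0 \<le> 1 - cos (u * real_of_int z)"]
    by (smt (verit) cos_le_one cos_ge_minus_one)
  then show ?thesis using assms(2) by (simp add: AE_measure_pmf_iff)
qed

lemma chi_eq_m1_supp:
  assumes "chi p u = -1" "z \<in> set_pmf p"
  shows "cos (u * real_of_int z) = -1"
proof -
  have int: "integrable (measure_pmf p) (\<lambda>z. 1 + cos (u * real_of_int z))"
    by (rule integrable_pmf_bounded[where B=2]) (smt (verit) cos_le_one cos_ge_minus_one)
  have "measure_pmf.expectation p (\<lambda>z. 1 + cos (u * real_of_int z)) = 0"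
    using assms(1) unfolding chi_def
    by (subst Bochner_Integration.integral_add) (auto intro!: integrable_pmf_bounded[where B=1])
  then have "AE z in measure_pmf p. 1 + cos (u * real_of_int z) = 0"
    using integral_nonneg_eq_0_iff_AE[OF int] AE_I2[of "measure_pmf p" "\<lambda>z. 0 \<le> 1 + cos (u * real_of_int z)"]
    by (smt (verit) cos_le_one cos_ge_minus_one)
  then have "1 + cos (u * real_of_int z) = 0" using assms(2) by (simp add: AE_measure_pmf_iff)
  then show ?thesis by simp
qed

lemma cos_pm1_diff:
  assumes "(cos x = 1 \<and> cos y = 1) \<or> (cos x = -1 \<and> cos y = -1)"
  shows "\<exists>k::int. x - y = 2 * pi * k"
  using assms
proof
  assume "cos x = 1 \<and> cos y = 1"
  then obtain a b :: int where "x = a * 2 * pi" "y = b * 2 * pi"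
    by (auto simp: cos_one_2pi_int)
  then have "x - y = 2 * pi * (a - b)" by (simp add: algebra_simps)
  then show ?thesis by blast
next
  assume "cos x = -1 \<and> cos y = -1"
  then obtain a b :: int where "x = (2 * a + 1) * pi" "y = (2 * b + 1) * pi"
    by (auto simp: cos_eq_minus1)
  then have "x - y = 2 * pi * (a - b)" by (simp add: algebra_simps)
  then show ?thesis by blast
qed

lemma aper_chi:
  assumes aper: "\<forall>c d::int. d \<ge> 2 \<longrightarrow> \<not> (set_pmf q \<subseteq> {x. \<exists>k. x = c + d * k})"
    and u: "0 < u" "u \<le> pi"
  shows "\<bar>chi q u\<bar> < 1"
proof (rule ccontr)
  assume "\<not> \<bar>chi q u\<bar> < 1"
  then have "chi q u = 1 \<or> chi q u = -1" using abs_chi_le[of q u] by linarith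
  then have same: "\<exists>k::int. u * z - u * z' = 2 * pi * k" if "z \<in> set_pmf q" "z' \<in> set_pmf q" for z z'
    using chi_eq_1_supp chi_eq_m1_supp that by (intro cos_pm1_diff) blast
  define H where "H = {n::int. \<exists>k::int. u * n = 2 * pi * k}"
  have Hsub: "a - b \<in> H" if ab: "a \<in> H" "b \<in> H" for a b
  proof -
    obtain k1 k2 :: int where "u * a = 2 * pi * k1" "u * b = 2 * pi * k2" using ab unfolding H_def by auto
    then have "u * real_of_int (a - b) = 2 * pi * real_of_int (k1 - k2)" by (simp add: algebra_simps)
    then show ?thesis unfolding H_def by blast
  qed
  have Hmul: "c * a \<in> H" if a: "a \<in> H" for a c
  proof -
    obtain k1 :: int where "u * a = 2 * pi * k1" using a unfolding H_def by auto
    then have "u * real_of_int (c * a) = 2 * pi * real_of_int (c * k1)" by (simp add: algebra_simps)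
    then show ?thesis unfolding H_def by blast
  qed
  have H1: "1 \<notin> H"
  proof
    assume "1 \<in> H"
    then obtain k :: int where k: "u = 2 * pi * k" unfolding H_def by auto
    show False
    proof (cases "k \<ge> 1")
      case True
      then have "2 * pi * 1 \<le> 2 * pi * k" by (intro mult_left_mono) auto
      then show False using k u pi_gt_zero by linarith
    next
      case False
      then have "k \<le> 0" by simp
      then have "2 * pi * k \<le> 0" by (simp add: mult_nonneg_nonpos)
      then show False using k u by linarith
    qed
  qed
  obtain z0 where z0: "z0 \<in> set_pmf q" using set_pmf_not_empty[of q] by blast
  have diffH: "z - z0 \<in> H" if "z \<in> set_pmf q" for z
    using same[OF that z0] unfolding H_def by (simp add: algebra_simps)
  show False
  proof (cases "\<exists>n\<in>H. n > 0")
    case True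
    define m where "m = (LEAST m::nat. int m \<in> H \<and> m > 0)"
    obtain n where n: "n \<in> H" "n > 0" using True by blast
    have mH: "int m \<in> H \<and> m > 0"
      unfolding m_def by (rule LeastI[of _ "nat n"]) (use n in auto)
    define d where "d = int m"
    have dH: "d \<in> H \<and> d > 0" using mH d_def by auto
    have dmin: "\<not> (k \<in> H \<and> 0 < k \<and> k < d)" for k
    proof
      assume k: "k \<in> H \<and> 0 < k \<and> k < d"
      then have "nat k < m" using d_def by auto
      moreover have "int (nat k) \<in> H \<and> nat k > 0" using k by auto
      ultimately show False using not_less_Least[of "nat k" "\<lambda>m. int m \<in> H \<and> m > 0"] m_def by auto
    qed
    have ddvd: "d dvd n" if "n \<in> H" for n
    proof -
      have "n mod d = n - d * (n div d)" by (simp add: minus_div_mult_eq_mod[symmetric] algebra_simps)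
      moreover have "n - (n div d) * d \<in> H" using Hsub[OF that Hmul[OF conjunct1[OF dH]]] by simp
      ultimately have "n mod d \<in> H" by (metis minus_mult_div_eq_mod mult.commute)
      moreover have "0 \<le> n mod d" "n mod d < d" using dH by auto
      ultimately have "n mod d = 0" using dmin[of "n mod d"] by auto
      then show ?thesis by auto
    qed
    have "d \<noteq> 1" using dH H1 by auto
    then have "d \<ge> 2" using dH by auto
    moreover have "set_pmf q \<subseteq> {x. \<exists>k. x = z0 + d * k}"
    proof
      fix z assume "z \<in> set_pmf q"
      then have "d dvd z - z0" using ddvd diffH by blast
      then obtain k where "z - z0 = d * k" by (auto elim: dvdE)
      then show "z \<in> {x. \<exists>k. x = z0 + d * k}" by (auto intro!: exI[of _ k])
    qed
    ultimately show False using aper by blast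
  next
    case False
    have "set_pmf q \<subseteq> {x. \<exists>k. x = z0 + 2 * k}"
    proof
      fix z assume z: "z \<in> set_pmf q"
      have "z - z0 \<in> H" "z0 - z \<in> H" using diffH[OF z] Hsub[OF _ diffH[OF z], of 0]
        by (auto simp: H_def)
      then have "z = z0" using False by (cases "z - z0 > 0"; cases "z0 - z > 0") auto
      then show "z \<in> {x. \<exists>k. x = z0 + 2 * k}" by auto
    qed
    then show False using aper by blast
  qed
qed



lemma cheb: "\<exists>T::real poly. \<forall>u. poly T (cos u) = cos (real j * u)"
proof (induction j rule: less_induct)
  case (less j)
  show ?case
  proof (cases j)
    case 0
    then show ?thesis by (intro exI[of _ "[:1:]"]) simp
  next
    case (Suc k)
    show ?thesis
    proof (cases k)
      case 0
      then show ?thesis using Suc by (intro exI[of _ "[:0, 1:]"]) simp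
    next
      case (Suc i)
      obtain T1 where T1: "\<forall>u. poly T1 (cos u) = cos (real k * u)" using less[of k] \<open>j = Suc k\<close> by blast
      obtain T0 where T0: "\<forall>u. poly T0 (cos u) = cos (real i * u)" using less[of i] \<open>j = Suc k\<close> Suc by auto
      have "poly (Polynomial.smult 2 ([:0, 1:] * T1) - T0) (cos u) = cos (real j * u)" for u
      proof -
        have "cos u * cos (real k * u) = (cos (u - real k * u) + cos (u + real k * u)) / 2"
          by (rule cos_times_cos)
        moreover have "u - real k * u = - (real i * u)" using Suc by (simp add: algebra_simps)
        moreover have "u + real k * u = real j * u" using Suc \<open>j = Suc k\<close> by (simp add: algebra_simps)
        ultimately have "2 * (cos u * cos (real k * u)) - cos (real i * u) = cos (real j * u)"
          by simp
        then show ?thesis using T0 T1 by simp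
      qed
      then show ?thesis by blast
    qed
  qed
qed

lemma trig_poly: "\<exists>F::real poly. \<forall>u. poly F (cos u) = (\<Sum>j<n. a j * cos (real j * u))"
proof (induction n)
  case 0
  then show ?case by (intro exI[of _ 0]) simp
next
  case (Suc n)
  obtain F where F: "\<forall>u. poly F (cos u) = (\<Sum>j<n. a j * cos (real j * u))" using Suc by blast
  obtain T where T: "\<forall>u. poly T (cos u) = cos (real n * u)" using cheb by blast
  have "\<forall>u. poly (F + Polynomial.smult (a n) T) (cos u) = (\<Sum>j<Suc n. a j * cos (real j * u))"
    using F T by simp
  then show ?case by blast
qed

lemma kap_nat: "kap (int j) (int k) = (if j = k then (if k = 0 then pi else pi / 2) else 0)"
  unfolding kap_def by auto

lemma orthogonality:
  assumes "\<forall>u\<in>{0..pi}. (\<Sum>j<n. a j * cos (real j * u)) = 0" "k < n"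
  shows "a k = 0"
proof -
  have hi: "((\<lambda>u. \<Sum>j<n. a j * (cos (real_of_int (int j) * u) * cos (real_of_int (int k) * u))) has_integral
      (\<Sum>j<n. a j * kap (int j) (int k))) {0..pi}"
    by (intro has_integral_sum has_integral_mult_right has_integral_cos_cos) auto
  have s: "(\<Sum>j<n. a j * kap (int j) (int k)) = a k * kap (int k) (int k)"
    using assms(2) by (subst sum.remove[of _ k]) (auto simp: kap_nat)
  have z: "integral {0..pi} (\<lambda>u. \<Sum>j<n. a j * (cos (real_of_int (int j) * u) * cos (real_of_int (int k) * u))) = 0"
  proof -
    have "integral {0..pi} (\<lambda>u. \<Sum>j<n. a j * (cos (real_of_int (int j) * u) * cos (real_of_int (int k) * u)))
        = integral {0..pi} (\<lambda>u. 0)"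
    proof (rule integral_cong)
      fix u :: real assume u: "u \<in> {0..pi}"
      have "(\<Sum>j<n. a j * (cos (real_of_int (int j) * u) * cos (real_of_int (int k) * u)))
          = (\<Sum>j<n. a j * cos (real j * u)) * cos (real k * u)"
        by (simp add: sum_distrib_right mult.assoc)
      moreover have "(\<Sum>j<n. a j * cos (real j * u)) = 0" using assms(1) u by blast
      ultimately show "(\<Sum>j<n. a j * (cos (real_of_int (int j) * u) * cos (real_of_int (int k) * u))) = 0"
        by (simp only: mult_zero_left)
    qed
    then show ?thesis by simp
  qed
  have "a k * kap (int k) (int k) = 0" using integral_unique[OF hi] s z by simp
  moreover have "kap (int k) (int k) > 0" by (simp add: kap_nat)
  ultimately show ?thesis by simp
qed

lemma trig_zeros_finite:
  assumes "\<And>u. poly F (cos u) = f u"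
    and "F \<noteq> 0"
  shows "finite {u\<in>{0..pi}. f u = 0}"
proof -
  have "{u\<in>{0..pi}. f u = 0} \<subseteq> arccos ` {x. poly F x = 0}"
  proof
    fix u assume u: "u \<in> {u\<in>{0..pi}. f u = 0}"
    then have "u = arccos (cos u)" by (simp add: arccos_cos)
    moreover have "cos u \<in> {x. poly F x = 0}" using u assms(1) by simp
    ultimately show "u \<in> arccos ` {x. poly F x = 0}" by blast
  qed
  then show ?thesis using poly_roots_finite[OF assms(2)] finite_subset by blast
qed



lemma cont_near:
  fixes g :: "real \<Rightarrow> real"
  assumes "continuous_on {0..pi} g" "e > 0"
  shows "\<exists>d>0. \<forall>u. 0 \<le> u \<and> u \<le> pi \<and> u < d \<longrightarrow> \<bar>g u - g 0\<bar> < e"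
proof -
  have "0 \<in> {0..pi}" by auto
  from assms(1) this assms(2) obtain d where "d > 0" "\<forall>x'\<in>{0..pi}. dist x' 0 < d \<longrightarrow> dist (g x') (g 0) < e"
    unfolding continuous_on_iff by blast
  then show ?thesis by (intro exI[of _ d]) (auto simp: dist_real_def)
qed

lemma analytic:
  fixes psi f :: "real \<Rightarrow> real"
  assumes cpsi: "continuous_on {0..pi} psi" and cf: "continuous_on {0..pi} f"
    and psi0: "psi 0 = 1" and psilt: "\<And>u. 0 < u \<Longrightarrow> u \<le> pi \<Longrightarrow> \<bar>psi u\<bar> < 1"
    and eta: "0 < eta" "eta \<le> pi" and fpos: "\<And>u. 0 < u \<Longrightarrow> u \<le> eta \<Longrightarrow> f u > 0"
  shows "\<exists>t. integral {0..pi} (\<lambda>u. psi u ^ Suc t * f u) > 0"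
proof -
  have f0: "f 0 \<ge> 0"
  proof (rule ccontr)
    assume "\<not> f 0 \<ge> 0"
    then obtain d where d: "d > 0" "\<forall>u. 0 \<le> u \<and> u \<le> pi \<and> u < d \<longrightarrow> \<bar>f u - f 0\<bar> < - f 0"
      using cont_near[OF cf, of "- f 0"] by auto
    define u where "u = min eta (d / 2)"
    have "0 < u" "u \<le> eta" "u < d" using d eta by (auto simp: u_def)
    then have "\<bar>f u - f 0\<bar> < - f 0" "f u > 0" using d eta fpos by auto
    then show False by linarith
  qed
  have fnn: "f u \<ge> 0" if "0 \<le> u" "u \<le> eta" for u
    using f0 fpos[of u] that by (cases "u = 0") auto
  obtain d1 where d1: "d1 > 0" "\<forall>u. 0 \<le> u \<and> u \<le> pi \<and> u < d1 \<longrightarrow> \<bar>psi u - psi 0\<bar> < 1/2"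
    using cont_near[OF cpsi, of "1/2"] by auto
  define eps where "eps = min eta (d1 / 2)"
  have eps: "0 < eps" "eps \<le> eta" "eps \<le> pi" "eps < d1" using d1 eta by (auto simp: eps_def)
  have psipos: "psi u > 0" if "0 \<le> u" "u \<le> eps" for u
  proof -
    have "\<bar>psi u - psi 0\<bar> < 1/2" using d1(2)[rule_format, of u] that eps by auto
    then have "- (1/2) < psi u - psi 0" apply (simp only: abs_less_iff) by linarith
    then show ?thesis using psi0 by linarith
  qed
  have "continuous_on {eps..pi} (\<lambda>u. \<bar>psi u\<bar>)"
    by (intro continuous_intros continuous_on_subset[OF cpsi]) (use eps in auto)
  then obtain x where x: "x \<in> {eps..pi}" "\<forall>y\<in>{eps..pi}. \<bar>psi y\<bar> \<le> \<bar>psi x\<bar>"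
    using continuous_attains_sup[of "{eps..pi}" "\<lambda>u. \<bar>psi u\<bar>"] eps by auto
  define M where "M = \<bar>psi x\<bar>"
  have M: "M < 1" "0 \<le> M" using psilt[of x] x eps by (auto simp: M_def)
  have Mb: "\<bar>psi y\<bar> \<le> M" if "eps \<le> y" "y \<le> pi" for y using x that by (auto simp: M_def)
  define th where "th = (1 + M) / 2"
  have th: "M < th" "th < 1" "0 < th" using M by (auto simp: th_def)
  obtain d2 where d2: "d2 > 0" "\<forall>u. 0 \<le> u \<and> u \<le> pi \<and> u < d2 \<longrightarrow> \<bar>psi u - psi 0\<bar> < 1 - th"
    using cont_near[OF cpsi, of "1 - th"] th by auto
  define b where "b = min eps (d2 / 2)"
  define a where "a = b / 2"
  have ab: "0 < a" "a < b" "b \<le> eps" "b < d2" using d2 eps by (auto simp: a_def b_def)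
  have psith: "psi u \<ge> th" if "0 \<le> u" "u \<le> b" for u
    using d2(2)[rule_format, of u] that ab eps psi0 by auto
  have "continuous_on {a..b} f"
    by (rule continuous_on_subset[OF cf]) (use ab eps in auto)
  then obtain y where y: "y \<in> {a..b}" "\<forall>z\<in>{a..b}. f y \<le> f z"
    using continuous_attains_inf[of "{a..b}" f] ab by auto
  define c where "c = f y"
  have c: "c > 0" using fpos[of y] y ab eps by (auto simp: c_def)
  have cb: "f z \<ge> c" if "a \<le> z" "z \<le> b" for z using y that by (auto simp: c_def)
  have "continuous_on {0..pi} (\<lambda>u. \<bar>f u\<bar>)" by (intro continuous_intros cf)
  then obtain w where w: "w \<in> {0..pi}" "\<forall>z\<in>{0..pi}. \<bar>f z\<bar> \<le> \<bar>f w\<bar>"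
    using continuous_attains_sup[of "{0..pi}" "\<lambda>u. \<bar>f u\<bar>"] by auto
  define B where "B = \<bar>f w\<bar>"
  have B: "B \<ge> 0" "\<And>z. 0 \<le> z \<Longrightarrow> z \<le> pi \<Longrightarrow> \<bar>f z\<bar> \<le> B" using w by (auto simp: B_def)
  define r where "r = M / th"
  have r: "0 \<le> r" "r < 1" using M th by (auto simp: r_def)
  define K where "K = (b - a) * c / (pi * B + 1)"
  have K: "K > 0" using ab c B pi_gt_zero unfolding K_def
    by (intro divide_pos_pos mult_pos_pos) (auto intro!: add_nonneg_pos mult_nonneg_nonneg)
  have "(\<lambda>n. r ^ n) \<longlonglongrightarrow> 0" using r by (intro LIMSEQ_power_zero) auto
  then have "eventually (\<lambda>n. r ^ n < K) sequentially" using K by (rule order_tendstoD(2))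
  then obtain N where N: "\<And>n. n \<ge> N \<Longrightarrow> r ^ n < K" by (auto simp: eventually_sequentially)
  define t where "t = Suc N"
  have rt: "r ^ t < K" unfolding t_def by (rule N) simp
  have cg: "continuous_on {0..pi} (\<lambda>u. psi u ^ t * f u)"
    by (intro continuous_intros cpsi cf)
  have ig: "(\<lambda>u. psi u ^ t * f u) integrable_on {l..h}" if "0 \<le> l" "h \<le> pi" for l h
    by (rule integrable_continuous_interval, rule continuous_on_subset[OF cg]) (use that in auto)
  have pi_split: "integral {0..pi} g = integral {0..a} g + integral {a..b} g + integral {b..eps} g + integral {eps..pi} g"
    if "g = (\<lambda>u. psi u ^ t * f u)" for g
  proof -
    have "integral {0..eps} g + integral {eps..pi} g = integral {0..pi} g"
      using Henstock_Kurzweil_Integration.integral_combine[where a=0 and c=eps and b=pi and f=g] ig[of 0 pi] that eps by auto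
    moreover have "integral {0..b} g + integral {b..eps} g = integral {0..eps} g"
      using Henstock_Kurzweil_Integration.integral_combine[where a=0 and c=b and b=eps and f=g] ig[of 0 eps] that eps ab by auto
    moreover have "integral {0..a} g + integral {a..b} g = integral {0..b} g"
      using Henstock_Kurzweil_Integration.integral_combine[where a=0 and c=a and b=b and f=g] ig[of 0 b] that eps ab by auto
    ultimately show ?thesis by linarith
  qed
  have gnn: "psi u ^ t * f u \<ge> 0" if "0 \<le> u" "u \<le> eps" for u
  proof -
    have "psi u \<ge> 0" using psipos[OF that] by simp
    moreover have "f u \<ge> 0" using fnn[of u] that eps by simp
    ultimately show ?thesis by simp
  qed
  have I1: "integral {0..a} (\<lambda>u. psi u ^ t * f u) \<ge> 0"
    by (rule integral_nonneg[OF ig]) (use ab eps gnn in auto)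
  have I3: "integral {b..eps} (\<lambda>u. psi u ^ t * f u) \<ge> 0"
    by (rule integral_nonneg[OF ig]) (use ab eps gnn in auto)
  have I2: "integral {a..b} (\<lambda>u. psi u ^ t * f u) \<ge> (b - a) * (th ^ t * c)"
  proof -
    have "integral {a..b} (\<lambda>u. th ^ t * c) \<le> integral {a..b} (\<lambda>u. psi u ^ t * f u)"
    proof (rule integral_le)
      show "(\<lambda>u. th ^ t * c) integrable_on {a..b}" by (rule integrable_const_ivl)
      show "(\<lambda>u. psi u ^ t * f u) integrable_on {a..b}" by (rule ig) (use ab eps in auto)
      fix u assume u: "u \<in> {a..b}"
      have "th ^ t \<le> psi u ^ t" using psith[of u] u ab th by (intro power_mono) auto
      moreover have "c \<le> f u" using cb u by auto
      moreover have "0 \<le> th ^ t" using th by simp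
      ultimately have "0 \<le> psi u ^ t" "th ^ t \<le> psi u ^ t" "c \<le> f u" by linarith+
      then show "th ^ t * c \<le> psi u ^ t * f u"
        using th c by (intro mult_mono) auto
    qed
    then show ?thesis using ab by (simp add: mult_ac)
  qed
  have I4: "integral {eps..pi} (\<lambda>u. psi u ^ t * f u) \<ge> - ((pi - eps) * (M ^ t * B))"
  proof -
    have "integral {eps..pi} (\<lambda>u. - (M ^ t * B)) \<le> integral {eps..pi} (\<lambda>u. psi u ^ t * f u)"
    proof (rule integral_le)
      show "(\<lambda>u. - (M ^ t * B)) integrable_on {eps..pi}" by (rule integrable_const_ivl)
      show "(\<lambda>u. psi u ^ t * f u) integrable_on {eps..pi}" by (rule ig) (use eps in auto)
      fix u assume u: "u \<in> {eps..pi}"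
      have "\<bar>psi u\<bar> ^ t \<le> M ^ t" using Mb[of u] u by (intro power_mono) auto
      moreover have "\<bar>f u\<bar> \<le> B" using B(2)[of u] u eps by auto
      ultimately have "\<bar>psi u ^ t * f u\<bar> \<le> M ^ t * B"
        by (simp add: abs_mult power_abs) (intro mult_mono, auto simp: M)
      then show "- (M ^ t * B) \<le> psi u ^ t * f u" by linarith
    qed
    then show ?thesis using eps by (simp add: mult_ac)
  qed
  have "pi * B * M ^ t < (b - a) * (th ^ t * c)"
  proof -
    have Mt: "M ^ t = r ^ t * th ^ t" using th by (simp add: r_def power_divide)
    have "pi * B * r ^ t \<le> (pi * B + 1) * r ^ t" using r by (intro mult_right_mono) auto
    also have "\<dots> < (pi * B + 1) * K" using rt B pi_gt_zero
      by (intro mult_strict_left_mono) (auto intro!: add_nonneg_pos)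
    also have "\<dots> = (b - a) * c"
    proof -
      have "pi * B \<ge> 0" using B pi_gt_zero by simp
      then have "pi * B + 1 \<noteq> 0" by linarith
      then show ?thesis unfolding K_def by simp
    qed
    finally have "pi * B * r ^ t < (b - a) * c" .
    then have "pi * B * r ^ t * th ^ t < (b - a) * c * th ^ t" using th
      by (intro mult_strict_right_mono) auto
    then show ?thesis by (simp add: Mt algebra_simps)
  qed
  moreover have "(pi - eps) * (M ^ t * B) \<le> pi * B * M ^ t"
    using eps M B by (simp add: algebra_simps mult_right_mono)
  ultimately have "integral {0..pi} (\<lambda>u. psi u ^ t * f u) > 0"
    using pi_split[OF refl] I1 I2 I3 I4 by linarith
  then show ?thesis unfolding t_def by blast
qed



lemma walk_integral:
  assumes symm: "\<forall>z. pmf q z = pmf q (- z)"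
  shows "integral {0..pi} (\<lambda>u. chi q u ^ t * cos (real j * u)) = pi * pmf (walk_dist q t) (int j)"
proof -
  have "integral {0..pi} (\<lambda>u. chi q u ^ t * cos (real j * u)) =
      integral {0..pi} (\<lambda>u. chi (walk_dist q t) u * cos (real_of_int (int j) * u))"
    by (simp add: chi_walk[OF symm])
  also have "\<dots> = (\<Sum>a\<in>{int j, - int j}. kap a (int j) * pmf (walk_dist q t) a)"
    by (rule inversion)
  also have "\<dots> = pi * pmf (walk_dist q t) (int j)"
  proof (cases "j = 0")
    case True
    then show ?thesis by (simp add: kap_def)
  next
    case False
    then have "(\<Sum>a\<in>{int j, - int j}. kap a (int j) * pmf (walk_dist q t) a) =
        pi / 2 * pmf (walk_dist q t) (int j) + pi / 2 * pmf (walk_dist q t) (- int j)"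
      by (simp add: kap_def)
    also have "\<dots> = pi * pmf (walk_dist q t) (int j)"
      using walk_sym_pmf[OF symm, of t "int j"] by simp
    finally show ?thesis .
  qed
  finally show ?thesis .
qed

lemma key:
  assumes symm: "\<forall>z. pmf q z = pmf q (- z)"
    and aper: "\<forall>c d::int. d \<ge> 2 \<longrightarrow> \<not> (set_pmf q \<subseteq> {x. \<exists>k. x = c + d * k})"
    and hv: "\<forall>t. (\<Sum>j<n. pmf (walk_dist q (Suc t)) (int j) * v j) = 0"
  shows "\<forall>j<n. v j = 0"
proof -
  define f where "f u = (\<Sum>j<n. v j * cos (real j * u))" for u
  have cf: "continuous_on S f" for S unfolding f_def by (intro continuous_intros)
  have intf: "integral {0..pi} (\<lambda>u. chi q u ^ t * f u) = pi * (\<Sum>j<n. pmf (walk_dist q t) (int j) * v j)" for t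
  proof -
    have "integral {0..pi} (\<lambda>u. chi q u ^ t * f u) =
        integral {0..pi} (\<lambda>u. \<Sum>j<n. v j * (chi q u ^ t * cos (real j * u)))"
      unfolding f_def by (simp add: sum_distrib_left mult.left_commute)
    also have "\<dots> = (\<Sum>j<n. integral {0..pi} (\<lambda>u. v j * (chi q u ^ t * cos (real j * u))))"
      by (rule integral_sum) (auto intro!: integrable_continuous_interval continuous_intros continuous_on_chi)
    also have "\<dots> = (\<Sum>j<n. v j * (pi * pmf (walk_dist q t) (int j)))"
      by (simp add: walk_integral[OF symm])
    also have "\<dots> = pi * (\<Sum>j<n. pmf (walk_dist q t) (int j) * v j)"
      by (simp add: sum_distrib_left algebra_simps)
    finally show ?thesis .
  qed
  obtain F where F: "\<And>u. poly F (cos u) = f u" using trig_poly[of v n] unfolding f_def by blast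
  show ?thesis
  proof (cases "F = 0")
    case True
    then have "\<forall>u\<in>{0..pi}. (\<Sum>j<n. v j * cos (real j * u)) = 0" using F unfolding f_def by auto
    then show ?thesis using orthogonality by blast
  next
    case False
    have finZ: "finite {u\<in>{0..pi}. f u = 0}" by (rule trig_zeros_finite[OF F False])
    define Z where "Z = insert pi ({u\<in>{0..pi}. f u = 0} - {0})"
    have Zfin: "finite Z" "Z \<noteq> {}" using finZ by (auto simp: Z_def)
    have Zpos: "z > 0" if "z \<in> Z" for z using that pi_gt_zero by (auto simp: Z_def)
    define eta where "eta = Min Z / 2"
    have MinZ: "Min Z > 0" using Zfin Zpos by auto
    have MinZpi: "Min Z \<le> pi" using Zfin by (auto simp: Z_def)
    have eta: "0 < eta" "eta \<le> pi" using MinZ MinZpi pi_gt_zero by (auto simp: eta_def)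
    have fnz: "f u \<noteq> 0" if "0 < u" "u \<le> eta" for u
    proof
      assume "f u = 0"
      then have "u \<in> Z" using that eta by (auto simp: Z_def)
      then have "Min Z \<le> u" using Zfin by auto
      then show False using that MinZ by (auto simp: eta_def)
    qed
    define sg :: real where "sg = (if f eta > 0 then 1 else -1)"
    define g where "g u = sg * f u" for u
    have cg: "continuous_on S g" for S unfolding g_def by (intro continuous_intros cf)
    have geta: "g eta > 0" using fnz[of eta] eta by (auto simp: g_def sg_def)
    have gpos: "g u > 0" if u: "0 < u" "u \<le> eta" for u
    proof (rule ccontr)
      assume "\<not> g u > 0"
      then have "g u \<le> 0" by simp
      then obtain x where x: "u \<le> x" "x \<le> eta" "g x = 0"
        using IVT'[of g u 0 eta] geta u cg by auto
      then have "f x = 0" by (auto simp: g_def sg_def split: if_splits)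
      then show False using fnz[of x] x u by auto
    qed
    obtain t where t: "integral {0..pi} (\<lambda>u. chi q u ^ Suc t * g u) > 0"
      using analytic[of "chi q" g eta] continuous_on_chi cg chi_0 aper_chi[OF aper] eta gpos
      by blast
    have "integral {0..pi} (\<lambda>u. chi q u ^ Suc t * g u) = sg * integral {0..pi} (\<lambda>u. chi q u ^ Suc t * f u)"
      unfolding g_def by (simp add: mult.left_commute)
    also have "\<dots> = 0" using intf[of "Suc t"] hv by simp
    finally show ?thesis using t by simp
  qed
qed



lemma finite_rows:
  fixes c :: "nat \<Rightarrow> nat \<Rightarrow> real"
  assumes "\<forall>v. (\<forall>t. (\<Sum>j<n. c t j * v j) = 0) \<longrightarrow> (\<forall>j<n. v j = 0)"
  shows "\<exists>r. \<forall>v. (\<forall>t<r. (\<Sum>j<n. c t j * v j) = 0) \<longrightarrow> (\<forall>j<n. v j = 0)"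
  using assms
proof (induction n arbitrary: c)
  case 0
  then show ?case by auto
next
  case (Suc n)
  have "\<exists>t0. c t0 n \<noteq> 0"
  proof (rule ccontr)
    assume "\<not> (\<exists>t0. c t0 n \<noteq> 0)"
    then have "\<forall>t. (\<Sum>j<Suc n. c t j * (if j = n then 1 else 0)) = 0" by simp
    then have "\<forall>j<Suc n. (if j = n then 1 else 0::real) = 0"
      using Suc.prems[rule_format, of "\<lambda>j. if j = n then 1 else 0"] by blast
    then show False by auto
  qed
  then obtain t0 where t0: "c t0 n \<noteq> 0" by blast
  define e where "e v = v(n := - (\<Sum>j<n. c t0 j * v j) / c t0 n)" for v :: "nat \<Rightarrow> real"
  define c' where "c' t j = c t j - c t n * c t0 j / c t0 n" for t j
  have A: "(\<Sum>j<Suc n. c t j * e v j) = (\<Sum>j<n. c' t j * v j)" for t v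
  proof -
    have "(\<Sum>j<Suc n. c t j * e v j) = (\<Sum>j<n. c t j * v j) + c t n * (- (\<Sum>j<n. c t0 j * v j) / c t0 n)"
      by (simp add: e_def)
    also have "\<dots> = (\<Sum>j<n. c t j * v j) - (c t n / c t0 n) * (\<Sum>j<n. c t0 j * v j)"
      by (simp add: field_simps)
    also have "\<dots> = (\<Sum>j<n. c' t j * v j)"
      unfolding c'_def by (simp add: sum_distrib_left sum_subtractf[symmetric] algebra_simps)
    finally show ?thesis .
  qed
  have "\<forall>v. (\<forall>t. (\<Sum>j<n. c' t j * v j) = 0) \<longrightarrow> (\<forall>j<n. v j = 0)"
  proof (rule allI, rule impI)
    fix v assume "\<forall>t. (\<Sum>j<n. c' t j * v j) = 0"
    then have "\<forall>t. (\<Sum>j<Suc n. c t j * e v j) = 0" using A by simp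
    then have ev0: "\<forall>j<Suc n. e v j = 0" using Suc.prems by blast
    show "\<forall>j<n. v j = 0"
    proof (intro allI impI)
      fix j assume "j < n"
      then have "e v j = 0" using ev0 by simp
      then show "v j = 0" using \<open>j < n\<close> by (simp add: e_def)
    qed
  qed
  then obtain r' where r': "\<forall>v. (\<forall>t<r'. (\<Sum>j<n. c' t j * v j) = 0) \<longrightarrow> (\<forall>j<n. v j = 0)"
    using Suc.IH by blast
  show ?case
  proof (rule exI[of _ "max r' (Suc t0)"], rule allI, rule impI)
    fix v assume hv: "\<forall>t<max r' (Suc t0). (\<Sum>j<Suc n. c t j * v j) = 0"
    then have "(\<Sum>j<Suc n. c t0 j * v j) = 0" by auto
    then have "(\<Sum>j<n. c t0 j * v j) + c t0 n * v n = 0" by simp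
    then have vn: "v n = - (\<Sum>j<n. c t0 j * v j) / c t0 n" using t0 by (simp add: field_simps)
    then have ev: "e v = v" unfolding e_def by auto
    have "\<forall>t<r'. (\<Sum>j<n. c' t j * v j) = 0"
    proof (intro allI impI)
      fix t assume "t < r'"
      then have "(\<Sum>j<Suc n. c t j * e v j) = 0" using hv ev by auto
      then show "(\<Sum>j<n. c' t j * v j) = 0" using A by simp
    qed
    then have "\<forall>j<n. v j = 0" using r' by blast
    moreover have "v n = 0" using vn calculation by simp
    ultimately show "\<forall>j<Suc n. v j = 0" using less_Suc_eq by auto
  qed
qed

lemma (in vec_space) full_rank_crit:
  fixes A :: "'a mat"
  assumes A: "A \<in> carrier_mat n nc"
    and H: "\<And>w. (\<forall>i<n. (\<Sum>j<nc. A $$ (i,j) * w j) = 0) \<Longrightarrow> \<forall>j<nc. w j = 0"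
  shows "rank A = nc"
proof -
  have dist: "distinct (cols A)"
  proof (rule ccontr)
    assume "\<not> distinct (cols A)"
    then obtain i j where ij: "i \<noteq> j" "(cols A) ! i = (cols A) ! j" "i < length (cols A)" "j < length (cols A)"
      using distinct_conv_nth by blast
    then have ij2: "col A i = col A j" "i < nc" "j < nc" using A by auto
    define w where "w l = (if l = i then 1 else if l = j then -1 else (0::'a))" for l
    have "\<forall>k<n. (\<Sum>l<nc. A $$ (k,l) * w l) = 0"
    proof (intro allI impI)
      fix k assume k: "k < n"
      have "col A i $ k = col A j $ k" using ij2(1) by simp
      moreover have "col A i $ k = A $$ (k, i)" "col A j $ k = A $$ (k, j)"
        using k A ij2(2,3) by auto
      ultimately have "A $$ (k, i) = A $$ (k, j)" by simp
      moreover have "(\<Sum>l<nc. A $$ (k,l) * w l) = A $$ (k, i) - A $$ (k, j)"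
      proof -
        have "(\<Sum>l<nc. A $$ (k,l) * w l) = (\<Sum>l<nc. (if l = i then A $$ (k,l) else 0)) - (\<Sum>l<nc. (if l = j then A $$ (k,l) else 0))"
        proof -
          have eq: "A $$ (k,l) * w l = (if l = i then A $$ (k,l) else 0) - (if l = j then A $$ (k,l) else 0)" for l
            unfolding w_def using ij(1) by auto
          show ?thesis by (simp only: eq sum_subtractf)
        qed
        also have "\<dots> = A $$ (k, i) - A $$ (k, j)"
          by (simp only: sum.delta finite_lessThan lessThan_iff ij2(2,3) if_True)
        finally show ?thesis .
      qed
      ultimately show "(\<Sum>l<nc. A $$ (k,l) * w l) = 0" by simp
    qed
    then have "w i = 0" using H ij2 by blast
    then show False using ij(1) by (simp add: w_def)
  qed
  have "lin_indpt (set (cols A))"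
  proof
    assume "lin_dep (set (cols A))"
    then obtain v where v: "v \<in> carrier_vec nc" "v \<noteq> 0\<^sub>v nc" "A *\<^sub>v v = 0\<^sub>v n"
      using lin_depE[OF A _ dist] by blast
    have "\<forall>i<n. (\<Sum>j<nc. A $$ (i,j) * v $ j) = 0"
    proof (intro allI impI)
      fix i assume i: "i < n"
      have "(A *\<^sub>v v) $ i = 0" using v(3) i by simp
      then show "(\<Sum>j<nc. A $$ (i,j) * v $ j) = 0"
        using i A v(1) by (simp add: mult_mat_vec_def scalar_prod_def atLeast0LessThan)
    qed
    then have "\<forall>j<nc. v $ j = 0" using H[of "\<lambda>j. v $ j"] by blast
    then have "v = 0\<^sub>v nc" using v(1) by (intro eq_vecI) auto
    then show False using v(2) by simp
  qed
  then show ?thesis using lin_indpt_full_rank[OF A dist] by blast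
qed



theorem lemma3p2:
  fixes q :: "int pmf" and m :: nat
  assumes symm: "\<forall>z. pmf q z = pmf q (- z)"
    and aper: "\<forall>c d::int. d \<ge> 2 \<longrightarrow> \<not> (set_pmf q \<subseteq> {x. \<exists>k. x = c + d * k})"
  shows "\<exists>r::nat. vec_space.rank r
           (mat r (m + 1) (\<lambda>(i, j). trans_prob q (i + 1) 0 (int j)) :: real mat) = m + 1"
proof -
  define c where "c t j = trans_prob q (Suc t) 0 (int j)" for t j
  have c_eq: "c t j = pmf (walk_dist q (Suc t)) (int j)" for t j
    unfolding c_def trans_prob_def by simp
  have H: "\<forall>v. (\<forall>t. (\<Sum>j<m+1. c t j * v j) = 0) \<longrightarrow> (\<forall>j<m+1. v j = 0)"
    using key[OF symm aper] unfolding c_eq by blast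
  obtain r where r: "\<forall>v. (\<forall>t<r. (\<Sum>j<m+1. c t j * v j) = 0) \<longrightarrow> (\<forall>j<m+1. v j = 0)"
    using finite_rows[OF H] by blast
  define A where "A = (mat r (m + 1) (\<lambda>(i, j). trans_prob q (i + 1) 0 (int j)) :: real mat)"
  have A: "A \<in> carrier_mat r (m + 1)" unfolding A_def by simp
  have "vec_space.rank r A = m + 1"
  proof (rule vec_space.full_rank_crit[OF A])
    fix w :: "nat \<Rightarrow> real"
    assume hw: "\<forall>i<r. (\<Sum>j<m + 1. A $$ (i, j) * w j) = 0"
    have "\<forall>t<r. (\<Sum>j<m+1. c t j * w j) = 0"
    proof (intro allI impI)
      fix t assume t: "t < r"
      have "(\<Sum>j<m+1. c t j * w j) = (\<Sum>j<m + 1. A $$ (t, j) * w j)"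
        by (rule sum.cong) (auto simp: A_def c_def t)
      then show "(\<Sum>j<m+1. c t j * w j) = 0" using hw t by simp
    qed
    then show "\<forall>j<m + 1. w j = 0" using r by blast
  qed
  then show ?thesis unfolding A_def by blast
qed

end
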